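(* Fix a nonnegative integer $n$ and define \[ R_n(a,b,c)=(1-a)_n(b)_n\,{}_4F_3\!\left(\left.{-n,a,a-c-n,c \atop \frac{a-n}{2},\frac{1+a-n}{2},b}\right| \frac{1}{4}\right). \] The group of transformations of $(a,b,c)$ generated by $(a,b,c)\mapsto(a,b,a-c-n)$ and $(a,b,c)\mapsto(1+c-b,1+c-a,c)$, both of which leave $R_n$ invariant, is isomorphic to $S_3$, and yields the six invariances (valid whenever both sides are defined) \begin{align*} R_n(a,b,c)&=R_n(a,b,c)=R_n(a,b,a-c-n)=R_n(1+c-b,1+c-a,c)=R_n(1+c-b,1+c-a,1-b-n)\\ &=R_n(1+a-b-c-n,1-c-n,a-c-n)=R_n(1+a-b-c-n,1-c-n,1-b-n). \end{align*} Moreover the function \[ V_n(x,y,z)=R_n\!\left(x-y-z,\ \frac{2+3x-y-z-n}{2},\ \frac{x+y-3z-n}{2}\right) \] is invariant under all six permutations of $x,y,z$.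
   Context: For $a\in\mathbb{C}$, $(a)_0=1$ and $(a)_k=a(a+1)\cdots(a+k-1)$ for $k\ge1$. The hypergeometric series is ${}_rF_s\!\left(\left.{\alpha_1,\ldots,\alpha_r\atop \beta_1,\ldots,\beta_s}\right|z\right)=\sum_{k\ge0}\frac{(\alpha_1)_k\cdots(\alpha_r)_k}{k!(\beta_1)_k\cdots(\beta_s)_k}z^k$, with no lower parameter zero or a negative integer; when an upper parameter is $-n$ it is a finite sum over $0\le k\le n$. *)

theory Defs
  imports Complex_Main "HOL-Library.Nonpos_Ints" "HOL-Algebra.Sym_Groups"
    "HOL-Algebra.Bij" "HOL-Algebra.Generated_Groups"
begin

text \<open>Terminating 4F3 series with first upper parameter -n: the series
  sum_k (-n)_k (a2)_k (a3)_k (a4)_k / (k! (b1)_k (b2)_k (b3)_k) z^k,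
  which is a finite sum over 0 <= k <= n (all later terms vanish).\<close>
definition F43_term :: "nat \<Rightarrow> complex \<Rightarrow> complex \<Rightarrow> complex \<Rightarrow> complex \<Rightarrow> complex \<Rightarrow> complex \<Rightarrow> complex \<Rightarrow> complex" where
  "F43_term n a2 a3 a4 b1 b2 b3 z =
     (\<Sum>k\<le>n. pochhammer (- of_nat n) k * pochhammer a2 k * pochhammer a3 k * pochhammer a4 k
             / (fact k * pochhammer b1 k * pochhammer b2 k * pochhammer b3 k) * z ^ k)"

definition R :: "nat \<Rightarrow> complex \<Rightarrow> complex \<Rightarrow> complex \<Rightarrow> complex" where
  "R n a b c = pochhammer (1 - a) n * pochhammer b n *
     F43_term n a (a - c - of_nat n) c ((a - of_nat n) / 2) ((1 + a - of_nat n) / 2) b (1/4)"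

definition R_defined :: "nat \<Rightarrow> complex \<Rightarrow> complex \<Rightarrow> complex \<Rightarrow> bool" where
  "R_defined n a b c \<longleftrightarrow>
     (a - of_nat n) / 2 \<notin> \<int>\<^sub>\<le>\<^sub>0 \<and> (1 + a - of_nat n) / 2 \<notin> \<int>\<^sub>\<le>\<^sub>0 \<and> b \<notin> \<int>\<^sub>\<le>\<^sub>0"

definition T1 :: "nat \<Rightarrow> complex \<times> complex \<times> complex \<Rightarrow> complex \<times> complex \<times> complex" where
  "T1 n = (\<lambda>(a, b, c). (a, b, a - c - of_nat n))"

definition T2 :: "complex \<times> complex \<times> complex \<Rightarrow> complex \<times> complex \<times> complex" where
  "T2 = (\<lambda>(a, b, c). (1 + c - b, 1 + c - a, c))"

definition Tgroup :: "nat \<Rightarrow> (complex \<times> complex \<times> complex \<Rightarrow> complex \<times> complex \<times> complex) monoid" where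
  "Tgroup n = (BijGroup UNIV) \<lparr> carrier := generate (BijGroup UNIV) {T1 n, T2} \<rparr>"

definition V_args :: "nat \<Rightarrow> complex \<Rightarrow> complex \<Rightarrow> complex \<Rightarrow> complex \<times> complex \<times> complex" where
  "V_args n x y z = (x - y - z, (2 + 3*x - y - z - of_nat n) / 2, (x + y - 3*z - of_nat n) / 2)"

definition V :: "nat \<Rightarrow> complex \<Rightarrow> complex \<Rightarrow> complex \<Rightarrow> complex" where
  "V n x y z = (case V_args n x y z of (a, b, c) \<Rightarrow> R n a b c)"

definition V_defined :: "nat \<Rightarrow> complex \<Rightarrow> complex \<Rightarrow> complex \<Rightarrow> bool" where
  "V_defined n x y z = (case V_args n x y z of (a, b, c) \<Rightarrow> R_defined n a b c)"

end

theory Submission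
  imports Defs
begin


definition Mf :: "complex \<Rightarrow> complex \<Rightarrow> complex \<Rightarrow> nat \<Rightarrow> nat \<Rightarrow> nat \<Rightarrow> complex" where
  "Mf \<alpha> \<beta> \<sigma> i j k = pochhammer \<alpha> i * pochhammer \<beta> j * pochhammer (\<sigma> + of_nat i + of_nat j) k"

definition Wd :: "nat \<Rightarrow> complex \<Rightarrow> complex \<Rightarrow> complex \<Rightarrow> complex" where
  "Wd n \<alpha> \<beta> \<gamma> = (\<Sum>(k,x)\<in>Sigma {..n} (\<lambda>k. {..n-k}).
      of_nat (n choose k) * of_nat ((n - k) choose x) * (-1)^k * Mf \<alpha> \<beta> (\<alpha>+\<beta>+\<gamma>) (k+x) (n-x) (n-k))"

definition Wc :: "nat \<Rightarrow> complex \<Rightarrow> complex \<Rightarrow> complex \<Rightarrow> complex" where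
  "Wc n \<alpha> \<beta> \<gamma> = (\<Sum>k\<le>n. of_nat (n choose k) * (-1)^k * pochhammer \<alpha> k * pochhammer \<beta> k *
      pochhammer (\<alpha> + \<beta> + 2 * of_nat k) (n - k) * pochhammer (\<alpha> + \<beta> + \<gamma> + of_nat n + of_nat k) (n - k))"

lemma Wd_Wc: "Wd n \<alpha> \<beta> \<gamma> = Wc n \<alpha> \<beta> \<gamma>"
proof -
  have "Wd n \<alpha> \<beta> \<gamma> = (\<Sum>k\<le>n. \<Sum>x\<le>n-k.
      of_nat (n choose k) * of_nat ((n - k) choose x) * (-1)^k * Mf \<alpha> \<beta> (\<alpha>+\<beta>+\<gamma>) (k+x) (n-x) (n-k))"
    unfolding Wd_def by (simp add: sum.Sigma)
  also have "\<dots> = Wc n \<alpha> \<beta> \<gamma>"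
    unfolding Wc_def
  proof (rule sum.cong[OF refl])
    fix k assume k: "k \<in> {..n}"
    have "(\<Sum>x\<le>n-k. of_nat (n choose k) * of_nat ((n - k) choose x) * (-1)^k * Mf \<alpha> \<beta> (\<alpha>+\<beta>+\<gamma>) (k+x) (n-x) (n-k))
      = (\<Sum>x\<le>n-k. of_nat (n choose k) * (-1)^k * pochhammer \<alpha> k * pochhammer \<beta> k *
            pochhammer (\<alpha>+\<beta>+\<gamma> + of_nat n + of_nat k) (n - k) *
            (of_nat ((n - k) choose x) * pochhammer (\<alpha> + of_nat k) x * pochhammer (\<beta> + of_nat k) ((n-k) - x)))"
    proof (rule sum.cong[OF refl])
      fix x assume x: "x \<in> {..n-k}"
      have e1: "pochhammer \<alpha> (k+x) = pochhammer \<alpha> k * pochhammer (\<alpha> + of_nat k) x"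
        by (rule pochhammer_product')
      have "pochhammer \<beta> (k + (n-k-x)) = pochhammer \<beta> k * pochhammer (\<beta> + of_nat k) (n-k-x)"
        by (rule pochhammer_product')
      moreover have "k + (n-k-x) = n - x" using x k by auto
      ultimately have e2: "pochhammer \<beta> (n-x) = pochhammer \<beta> k * pochhammer (\<beta> + of_nat k) (n-k-x)" by simp
      have e3: "\<alpha>+\<beta>+\<gamma> + of_nat (k+x) + of_nat (n-x) = \<alpha>+\<beta>+\<gamma> + of_nat n + of_nat k"
        using x k by (simp add: of_nat_diff)
      show "of_nat (n choose k) * of_nat ((n - k) choose x) * (-1)^k * Mf \<alpha> \<beta> (\<alpha>+\<beta>+\<gamma>) (k+x) (n-x) (n-k) =
         of_nat (n choose k) * (-1)^k * pochhammer \<alpha> k * pochhammer \<beta> k *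
            pochhammer (\<alpha>+\<beta>+\<gamma> + of_nat n + of_nat k) (n - k) *
            (of_nat ((n - k) choose x) * pochhammer (\<alpha> + of_nat k) x * pochhammer (\<beta> + of_nat k) ((n-k) - x))"
        unfolding Mf_def e1 e2 e3 by (simp add: algebra_simps)
    qed
    also have "\<dots> = of_nat (n choose k) * (-1)^k * pochhammer \<alpha> k * pochhammer \<beta> k *
            pochhammer (\<alpha>+\<beta>+\<gamma> + of_nat n + of_nat k) (n - k) *
            pochhammer ((\<alpha> + of_nat k) + (\<beta> + of_nat k)) (n-k)"
      by (simp only: sum_distrib_left[symmetric] pochhammer_binomial_sum[of "\<alpha> + of_nat k" "\<beta> + of_nat k" "n-k"])
    also have "(\<alpha> + of_nat k) + (\<beta> + of_nat k) = \<alpha> + \<beta> + 2 * of_nat k" by simp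
    finally show "(\<Sum>x\<le>n-k. of_nat (n choose k) * of_nat ((n - k) choose x) * (-1)^k * Mf \<alpha> \<beta> (\<alpha>+\<beta>+\<gamma>) (k+x) (n-x) (n-k))
      = of_nat (n choose k) * (-1)^k * pochhammer \<alpha> k * pochhammer \<beta> k *
      pochhammer (\<alpha> + \<beta> + 2 * of_nat k) (n - k) * pochhammer (\<alpha> + \<beta> + \<gamma> + of_nat n + of_nat k) (n - k)"
      by (simp add: algebra_simps)
  qed
  finally show ?thesis .
qed


lemma Mf_swap:
  fixes \<alpha> \<beta> \<gamma> :: complex and n k x :: nat
  assumes "k + x \<le> n"
  shows "(-1)^k * Mf \<alpha> \<beta> (\<alpha>+\<beta>+\<gamma>) (k+x) (n-x) (n-k) =
         (-1)^x * Mf \<alpha> (1 - 2 * of_nat n - \<alpha> - \<beta> - \<gamma>) (\<alpha> + (1 - 2 * of_nat n - \<alpha> - \<beta> - \<gamma>) + \<gamma>) (x+k) (n-k) (n-x)"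
proof -
  let ?\<sigma> = "\<alpha>+\<beta>+\<gamma>"
  have d1: "pochhammer (1 - 2 * of_nat n - \<alpha> - \<beta> - \<gamma>) (n-k) =
      (-1)^(n-k) * pochhammer (?\<sigma> + of_nat (k+x) + of_nat (n-x)) (n-k)"
  proof -
    have "pochhammer (- (?\<sigma> + 2 * of_nat n - 1)) (n-k) =
       (-1)^(n-k) * pochhammer (?\<sigma> + 2 * of_nat n - 1 - of_nat (n-k) + 1) (n-k)"
      by (rule pochhammer_minus)
    moreover have "?\<sigma> + 2 * of_nat n - 1 - of_nat (n-k) + 1 = ?\<sigma> + of_nat (k+x) + of_nat (n-x)"
      using assms by (simp add: of_nat_diff algebra_simps)
    moreover have "- (?\<sigma> + 2 * of_nat n - 1) = 1 - 2 * of_nat n - \<alpha> - \<beta> - \<gamma>" by (simp add: algebra_simps)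
    ultimately show ?thesis by metis
  qed
  have d2: "pochhammer (\<alpha> + (1 - 2 * of_nat n - \<alpha> - \<beta> - \<gamma>) + \<gamma> + of_nat (x+k) + of_nat (n-k)) (n-x)
       = (-1)^(n-x) * pochhammer \<beta> (n-x)"
  proof -
    have "pochhammer (- (\<beta> + of_nat (n-x) - 1)) (n-x) =
       (-1)^(n-x) * pochhammer (\<beta> + of_nat (n-x) - 1 - of_nat (n-x) + 1) (n-x)"
      by (rule pochhammer_minus)
    moreover have "- (\<beta> + of_nat (n-x) - 1) = \<alpha> + (1 - 2 * of_nat n - \<alpha> - \<beta> - \<gamma>) + \<gamma> + of_nat (x+k) + of_nat (n-k)"
      using assms by (simp add: of_nat_diff algebra_simps)
    moreover have "\<beta> + of_nat (n-x) - 1 - of_nat (n-x) + 1 = \<beta>" by simp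
    ultimately show ?thesis by metis
  qed
  have sgn: "(-1::complex)^x * ((-1)^(n-k) * (-1)^(n-x)) = (-1)^k"
  proof -
    have "x + ((n-k) + (n-x)) = k + 2 * (n - k)" using assms by simp
    hence "(-1::complex)^(x + ((n-k) + (n-x))) = (-1)^(k + 2 * (n - k))" by (simp only:)
    also have "\<dots> = (-1)^k" by (simp add: power_add power_mult)
    finally have "(-1::complex)^(x + ((n-k) + (n-x))) = (-1)^k" .
    thus ?thesis by (metis power_add)
  qed
  show ?thesis
    unfolding Mf_def d1 d2
    using sgn by (simp add: add.commute[of x k] algebra_simps)
qed


lemma choose_swap:
  assumes "k + x \<le> n"
  shows "(n choose k) * ((n - k) choose x) = (n choose x) * ((n - x) choose k)"
proof -
  have "(n choose (k+x)) * ((k+x) choose k) = (n choose k) * ((n - k) choose x)"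
    using choose_mult[of k "k+x" n] assms by simp
  moreover have "(n choose (x+k)) * ((x+k) choose x) = (n choose x) * ((n - x) choose k)"
    using choose_mult[of x "x+k" n] assms by simp
  moreover have "((k+x) choose k) = ((x+k) choose x)"
    using binomial_symmetric[of k "k+x"] by (simp add: add.commute)
  ultimately show ?thesis by (simp add: add.commute)
qed

lemma Wd_swap: "Wd n \<alpha> \<beta> \<gamma> = Wd n \<alpha> (1 - 2 * of_nat n - \<alpha> - \<beta> - \<gamma>) \<gamma>"
proof -
  let ?\<delta> = "1 - 2 * of_nat n - \<alpha> - \<beta> - \<gamma>"
  let ?S = "Sigma {..n} (\<lambda>k. {..n-k})"
  have "Wd n \<alpha> ?\<delta> \<gamma> = (\<Sum>(k,x)\<in>?S.
      of_nat (n choose x) * of_nat ((n - x) choose k) * (-1)^x * Mf \<alpha> ?\<delta> (\<alpha>+?\<delta>+\<gamma>) (x+k) (n-k) (n-x))"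
    unfolding Wd_def
    by (rule sum.reindex_bij_witness[where i = "\<lambda>(i, j). (j, i)" and j = "\<lambda>(i, j). (j, i)"]) auto
  also have "\<dots> = Wd n \<alpha> \<beta> \<gamma>"
  proof -
    have tm: "of_nat (n choose x) * of_nat ((n - x) choose k) * (-1)^x * Mf \<alpha> ?\<delta> (\<alpha>+?\<delta>+\<gamma>) (x+k) (n-k) (n-x) =
       of_nat (n choose k) * of_nat ((n - k) choose x) * (-1)^k * Mf \<alpha> \<beta> (\<alpha>+\<beta>+\<gamma>) (k+x) (n-x) (n-k)"
      if le: "k + x \<le> n" for k x
    proof -
      have "of_nat (n choose x) * of_nat ((n - x) choose k) = (of_nat (n choose k) * of_nat ((n - k) choose x) :: complex)"
        using choose_swap[OF le] by (metis of_nat_mult)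
      then show ?thesis
        using Mf_swap[OF le, of \<alpha> \<beta> \<gamma>] by (simp add: mult.assoc)
    qed
    show ?thesis unfolding Wd_def
      by (rule sum.cong[OF refl], simp only: split_paired_all prod.case, rule tm, auto)
  qed
  finally show ?thesis ..
qed


definition Rp :: "nat \<Rightarrow> complex \<Rightarrow> complex \<Rightarrow> complex \<Rightarrow> complex" where
  "Rp n a b c = (-1)^n * Wc n c (a - of_nat n - c) (b - a)"

lemma Wc_sym: "Wc n \<alpha> \<beta> \<gamma> = Wc n \<beta> \<alpha> \<gamma>"
  unfolding Wc_def by (simp add: ac_simps)

lemma Rp_T1: "Rp n a b (a - c - of_nat n) = Rp n a b c"
proof -
  have "a - of_nat n - (a - c - of_nat n) = c" by simp
  then show ?thesis unfolding Rp_def using Wc_sym by (simp add: algebra_simps)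
qed

lemma Rp_T2: "Rp n (1 + c - b) (1 + c - a) c = Rp n a b c"
proof -
  have e1: "1 + c - b - of_nat n - c = 1 - 2 * of_nat n - c - (a - of_nat n - c) - (b - a)"
    by (simp add: algebra_simps)
  have e2: "1 + c - a - (1 + c - b) = b - a" by simp
  show ?thesis unfolding Rp_def e1 e2
    using Wd_swap[of n c "a - of_nat n - c" "b - a"] by (simp add: Wd_Wc)
qed

lemma poch_neg_nat:
  assumes "k \<le> n"
  shows "pochhammer (- of_nat n :: complex) k = (-1)^k * of_nat (n choose k) * fact k"
proof -
  have "pochhammer (- of_nat n :: complex) k = (-1)^k * pochhammer (of_nat n - of_nat k + 1) k"
    by (rule pochhammer_minus)
  also have "pochhammer (of_nat n - of_nat k + 1 :: complex) k = of_nat (n choose k) * fact k"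
  proof -
    have "(of_nat n - of_nat k + 1 :: complex) = of_nat (n - k + 1)" using assms by (simp add: of_nat_diff)
    then have "pochhammer (of_nat n - of_nat k + 1 :: complex) k = of_nat (pochhammer (n - k + 1) k)"
      by (metis pochhammer_of_nat)
    also have "pochhammer (n - k + 1) k = (n choose k) * fact k"
    proof -
      have f1: "(fact n :: nat) = fact (n-k) * pochhammer (n-k+1) k"
        using pochhammer_product'[of "1::nat" "n-k" k] assms by (simp add: pochhammer_fact add.commute)
      have f2: "fact k * fact (n - k) * (n choose k) = (fact n :: nat)"
        using binomial_fact_lemma[OF assms] .
      have "fact (n-k) * pochhammer (n-k+1) k = fact (n-k) * ((n choose k) * fact k)"
        using f1 f2 by (simp add: ac_simps)
      then show ?thesis by simp
    qed
    finally show ?thesis by simp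
  qed
  finally show ?thesis by simp
qed


lemma poch_nz: "(z::complex) \<notin> \<int>\<^sub>\<le>\<^sub>0 \<Longrightarrow> pochhammer z k \<noteq> 0"
  by (auto simp: pochhammer_eq_0_iff)

lemma R_Rp:
  assumes "R_defined n a b c"
  shows "R n a b c = Rp n a b c"
proof -
  let ?A = "a - of_nat n"
  have nz1: "pochhammer (?A/2) k \<noteq> 0" and nz2: "pochhammer ((1 + a - of_nat n)/2) k \<noteq> 0"
    and nz3: "pochhammer b k \<noteq> 0" for k
    using assms unfolding R_defined_def by (auto intro!: poch_nz)
  have h2: "pochhammer (?A/2) k * pochhammer ((1 + a - of_nat n)/2) k = pochhammer ?A (2*k) / 4^k" for k
  proof -
    have "pochhammer (2 * (?A/2)) (2*k) = of_nat (2^(2*k)) * pochhammer (?A/2) k * pochhammer (?A/2 + 1/2) k"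
      by (rule pochhammer_double)
    moreover have "?A/2 + 1/2 = (1 + a - of_nat n)/2" by (simp add: field_simps)
    moreover have "(of_nat (2^(2*k)) :: complex) = 4^k" by (simp add: power_mult)
    moreover have "2 * (?A/2) = ?A" by simp
    ultimately have "pochhammer ?A (2*k) = 4^k * (pochhammer (?A/2) k * pochhammer ((1 + a - of_nat n)/2) k)"
      by (metis mult.assoc)
    then show ?thesis by (simp add: field_simps)
  qed
  have h4: "pochhammer (1 - a) n * pochhammer a k = (-1)^n * pochhammer ?A (2*k) * pochhammer (?A + 2 * of_nat k) (n-k)"
    if k: "k \<le> n" for k
  proof -
    have "pochhammer (- (a - 1)) n = (-1)^n * pochhammer (a - 1 - of_nat n + 1) n"
      by (rule pochhammer_minus)
    hence e1: "pochhammer (1 - a) n = (-1)^n * pochhammer ?A n" by simp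
    have e2: "pochhammer ?A (n + k) = pochhammer ?A n * pochhammer a k"
      using pochhammer_product'[of ?A n k] by simp
    have e3: "pochhammer ?A (2*k + (n-k)) = pochhammer ?A (2*k) * pochhammer (?A + 2 * of_nat k) (n-k)"
      using pochhammer_product'[of ?A "2*k" "n-k"] by simp
    have "2*k + (n-k) = n + k" using k by simp
    with e1 e2 e3 show ?thesis by (simp add: mult.assoc)
  qed
  have "R n a b c = (\<Sum>k\<le>n. pochhammer (1 - a) n * pochhammer b n *
     (pochhammer (- of_nat n) k * pochhammer a k * pochhammer (a - c - of_nat n) k * pochhammer c k
             / (fact k * pochhammer (?A / 2) k * pochhammer ((1 + a - of_nat n) / 2) k * pochhammer b k) * (1/4) ^ k))"
    unfolding R_def F43_term_def by (simp add: sum_distrib_left)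
  also have "\<dots> = (\<Sum>k\<le>n. (-1)^n * (of_nat (n choose k) * (-1)^k * pochhammer c k * pochhammer (a - of_nat n - c) k *
      pochhammer (c + (a - of_nat n - c) + 2 * of_nat k) (n - k) * pochhammer (c + (a - of_nat n - c) + (b - a) + of_nat n + of_nat k) (n - k)))"
  proof (rule sum.cong[OF refl])
    fix k assume "k \<in> {..n}"
    hence k: "k \<le> n" by simp
    have h3: "pochhammer b n = pochhammer b k * pochhammer (b + of_nat k) (n-k)"
      using pochhammer_product'[of b k "n-k"] k by simp
    have a1: "c + (a - of_nat n - c) + 2 * of_nat k = ?A + 2 * of_nat k" by simp
    have a2: "c + (a - of_nat n - c) + (b - a) + of_nat n + of_nat k = b + of_nat k" by simp
    have a3: "a - c - of_nat n = a - of_nat n - c" by simp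
    have nzA: "pochhammer ?A (2*k) \<noteq> 0" using h2[of k] nz1[of k] nz2[of k] by auto
    have "pochhammer (1 - a) n * pochhammer b n *
     (pochhammer (- of_nat n) k * pochhammer a k * pochhammer (a - c - of_nat n) k * pochhammer c k
             / (fact k * pochhammer (?A / 2) k * pochhammer ((1 + a - of_nat n) / 2) k * pochhammer b k) * (1/4) ^ k)
      = (pochhammer (1 - a) n * pochhammer a k) * pochhammer b n *
     (pochhammer (- of_nat n) k * pochhammer (a - c - of_nat n) k * pochhammer c k
             / (fact k * (pochhammer (?A / 2) k * pochhammer ((1 + a - of_nat n) / 2) k) * pochhammer b k) * (1/4) ^ k)"
      by (simp add: ac_simps)
    also have "\<dots> = ((-1)^n * pochhammer ?A (2*k) * pochhammer (?A + 2 * of_nat k) (n-k)) *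
        (pochhammer b k * pochhammer (b + of_nat k) (n-k)) *
     ((-1)^k * of_nat (n choose k) * fact k * pochhammer (a - of_nat n - c) k * pochhammer c k
             / (fact k * (pochhammer ?A (2*k) / 4^k) * pochhammer b k) * (1/4) ^ k)"
      unfolding h4[OF k] h3 h2 poch_neg_nat[OF k] a3 ..
    also have "\<dots> = (-1)^n * (of_nat (n choose k) * (-1)^k * pochhammer c k * pochhammer (a - of_nat n - c) k *
      pochhammer (?A + 2 * of_nat k) (n - k) * pochhammer (b + of_nat k) (n - k))"
      using nzA nz3[of k] by (simp add: field_simps power_one_over)
    finally show "pochhammer (1 - a) n * pochhammer b n *
     (pochhammer (- of_nat n) k * pochhammer a k * pochhammer (a - c - of_nat n) k * pochhammer c k
             / (fact k * pochhammer (?A / 2) k * pochhammer ((1 + a - of_nat n) / 2) k * pochhammer b k) * (1/4) ^ k) =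
     (-1)^n * (of_nat (n choose k) * (-1)^k * pochhammer c k * pochhammer (a - of_nat n - c) k *
      pochhammer (c + (a - of_nat n - c) + 2 * of_nat k) (n - k) * pochhammer (c + (a - of_nat n - c) + (b - a) + of_nat n + of_nat k) (n - k))"
      unfolding a1 a2 .
  qed
  also have "\<dots> = Rp n a b c"
    unfolding Rp_def Wc_def by (simp add: sum_distrib_left)
  finally show ?thesis .
qed


lemma Rp_inv:
  "Rp n a b (a - c - of_nat n) = Rp n a b c"
  "Rp n (1 + c - b) (1 + c - a) c = Rp n a b c"
  "Rp n (1 + c - b) (1 + c - a) (1 - b - of_nat n) = Rp n a b c"
  "Rp n (1 + a - b - c - of_nat n) (1 - c - of_nat n) (a - c - of_nat n) = Rp n a b c"
  "Rp n (1 + a - b - c - of_nat n) (1 - c - of_nat n) (1 - b - of_nat n) = Rp n a b c"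
proof -
  show t1: "Rp n a b (a - c - of_nat n) = Rp n a b c" by (rule Rp_T1)
  show t2: "Rp n (1 + c - b) (1 + c - a) c = Rp n a b c" by (rule Rp_T2)
  have e3: "1 - b - of_nat n = (1 + c - b) - c - of_nat n" by simp
  show "Rp n (1 + c - b) (1 + c - a) (1 - b - of_nat n) = Rp n a b c"
    unfolding e3 Rp_T1 t2 ..
  have e4a: "1 + a - b - c - of_nat n = 1 + (a - c - of_nat n) - b" by simp
  have e4b: "1 - c - of_nat n = 1 + (a - c - of_nat n) - a" by simp
  show t4: "Rp n (1 + a - b - c - of_nat n) (1 - c - of_nat n) (a - c - of_nat n) = Rp n a b c"
    unfolding e4a e4b Rp_T2 t1 ..
  have e5: "1 - b - of_nat n = (1 + a - b - c - of_nat n) - (a - c - of_nat n) - of_nat n" by simp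
  show "Rp n (1 + a - b - c - of_nat n) (1 - c - of_nat n) (1 - b - of_nat n) = Rp n a b c"
    unfolding e5 Rp_T1 t4 ..
qed

definition Vp :: "nat \<Rightarrow> complex \<Rightarrow> complex \<Rightarrow> complex \<Rightarrow> complex" where
  "Vp n x y z = Rp n (x - y - z) ((2 + 3*x - y - z - of_nat n) / 2) ((x + y - 3*z - of_nat n) / 2)"

lemma Vp_yz: "Vp n x z y = Vp n x y z"
proof -
  let ?a = "x - y - z" and ?b = "(2 + 3*x - y - z - of_nat n) / 2" and ?c = "(x + y - 3*z - of_nat n) / 2"
  have e1: "x - z - y = ?a" by simp
  have e2: "(2 + 3*x - z - y - of_nat n) / 2 = ?b" by simp
  have e3: "(x + z - 3*y - of_nat n) / 2 = ?a - ?c - of_nat n" by (simp add: field_simps)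
  show ?thesis unfolding Vp_def e1 e2 e3 Rp_T1 ..
qed

lemma Vp_xy: "Vp n y x z = Vp n x y z"
proof -
  let ?a = "x - y - z" and ?b = "(2 + 3*x - y - z - of_nat n) / 2" and ?c = "(x + y - 3*z - of_nat n) / 2"
  have e1: "y - x - z = 1 + ?c - ?b" by (simp add: field_simps)
  have e2: "(2 + 3*y - x - z - of_nat n) / 2 = 1 + ?c - ?a" by (simp add: field_simps)
  have e3: "(y + x - 3*z - of_nat n) / 2 = ?c" by (simp add: field_simps)
  show ?thesis unfolding Vp_def e1 e2 e3 Rp_T2 ..
qed

lemma V_Vp: "V_defined n x y z \<Longrightarrow> V n x y z = Vp n x y z"
  unfolding V_defined_def V_def V_args_def Vp_def by (simp add: R_Rp)

lemma analytic_part: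
  "(\<forall>a b c. R_defined n a b c \<longrightarrow>
      (R_defined n a b (a - c - of_nat n) \<longrightarrow>
         R n a b c = R n a b (a - c - of_nat n)) \<and>
      (R_defined n (1 + c - b) (1 + c - a) c \<longrightarrow>
         R n a b c = R n (1 + c - b) (1 + c - a) c) \<and>
      (R_defined n (1 + c - b) (1 + c - a) (1 - b - of_nat n) \<longrightarrow>
         R n a b c = R n (1 + c - b) (1 + c - a) (1 - b - of_nat n)) \<and>
      (R_defined n (1 + a - b - c - of_nat n) (1 - c - of_nat n) (a - c - of_nat n) \<longrightarrow>
         R n a b c = R n (1 + a - b - c - of_nat n) (1 - c - of_nat n) (a - c - of_nat n)) \<and>
      (R_defined n (1 + a - b - c - of_nat n) (1 - c - of_nat n) (1 - b - of_nat n) \<longrightarrow>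
         R n a b c = R n (1 + a - b - c - of_nat n) (1 - c - of_nat n) (1 - b - of_nat n))) \<and>
    (\<forall>x y z. V_defined n x y z \<longrightarrow>
      (V_defined n y x z \<longrightarrow> V n x y z = V n y x z) \<and>
      (V_defined n x z y \<longrightarrow> V n x y z = V n x z y) \<and>
      (V_defined n z y x \<longrightarrow> V n x y z = V n z y x) \<and>
      (V_defined n y z x \<longrightarrow> V n x y z = V n y z x) \<and>
      (V_defined n z x y \<longrightarrow> V n x y z = V n z x y))"
proof (intro conjI allI impI)
  fix a b c assume d: "R_defined n a b c"
  note r = R_Rp[OF d]
  { assume d2: "R_defined n a b (a - c - of_nat n)"
    show "R n a b c = R n a b (a - c - of_nat n)" using r R_Rp[OF d2] Rp_inv by simp }
  { assume d2: "R_defined n (1 + c - b) (1 + c - a) c"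
    show "R n a b c = R n (1 + c - b) (1 + c - a) c" using r R_Rp[OF d2] Rp_inv by simp }
  { assume d2: "R_defined n (1 + c - b) (1 + c - a) (1 - b - of_nat n)"
    show "R n a b c = R n (1 + c - b) (1 + c - a) (1 - b - of_nat n)" using r R_Rp[OF d2] Rp_inv by simp }
  { assume d2: "R_defined n (1 + a - b - c - of_nat n) (1 - c - of_nat n) (a - c - of_nat n)"
    show "R n a b c = R n (1 + a - b - c - of_nat n) (1 - c - of_nat n) (a - c - of_nat n)"
      using r R_Rp[OF d2] Rp_inv by simp }
  { assume d2: "R_defined n (1 + a - b - c - of_nat n) (1 - c - of_nat n) (1 - b - of_nat n)"
    show "R n a b c = R n (1 + a - b - c - of_nat n) (1 - c - of_nat n) (1 - b - of_nat n)"
      using r R_Rp[OF d2] Rp_inv by simp }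
next
  fix x y z assume d: "V_defined n x y z"
  note v = V_Vp[OF d]
  have s1: "\<And>x y z. Vp n x z y = Vp n x y z" by (rule Vp_yz)
  have s2: "\<And>x y z. Vp n y x z = Vp n x y z" by (rule Vp_xy)
  { assume d2: "V_defined n y x z" show "V n x y z = V n y x z" using v V_Vp[OF d2] s2 by simp }
  { assume d2: "V_defined n x z y" show "V n x y z = V n x z y" using v V_Vp[OF d2] s1 by simp }
  { assume d2: "V_defined n z y x" show "V n x y z = V n z y x" using v V_Vp[OF d2] s1 s2 by metis }
  { assume d2: "V_defined n y z x" show "V n x y z = V n y z x" using v V_Vp[OF d2] s1 s2 by metis }
  { assume d2: "V_defined n z x y" show "V n x y z = V n z x y" using v V_Vp[OF d2] s1 s2 by metis }
qed




definition Phi :: "nat \<Rightarrow> complex \<times> complex \<times> complex \<Rightarrow> complex \<times> complex \<times> complex" where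
  "Phi n v = (case v of (x, y, z) \<Rightarrow> V_args n x y z)"

definition Phiinv :: "nat \<Rightarrow> complex \<times> complex \<times> complex \<Rightarrow> complex \<times> complex \<times> complex" where
  "Phiinv n v = (case v of (a, b, c) \<Rightarrow>
     ((2*b - 2 + of_nat n - a)/2,
      (2*b - 2 + of_nat n - a)/2 - a - (2*((2*b - 2 + of_nat n - a)/2) - a - 2*c - of_nat n)/4,
      (2*((2*b - 2 + of_nat n - a)/2) - a - 2*c - of_nat n)/4))"

lemma Phi_Phiinv: "Phi n (Phiinv n v) = v"
  by (cases v) (simp add: Phi_def Phiinv_def V_args_def field_simps)

lemma Phiinv_Phi: "Phiinv n (Phi n v) = v"
  by (cases v) (simp add: Phi_def Phiinv_def V_args_def field_simps)

definition idx :: "complex \<times> complex \<times> complex \<Rightarrow> nat \<Rightarrow> complex" where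
  "idx v i = (if i = 1 then fst v else if i = 2 then fst (snd v) else snd (snd v))"

definition Pm :: "(nat \<Rightarrow> nat) \<Rightarrow> complex \<times> complex \<times> complex \<Rightarrow> complex \<times> complex \<times> complex" where
  "Pm p v = (idx v (p 1), idx v (p 2), idx v (p 3))"

lemma idx_Pm: "j \<in> {1..3} \<Longrightarrow> idx (Pm q v) j = idx v (q j)"
proof -
  assume "j \<in> {1..3}"
  hence "j = 1 \<or> j = 2 \<or> j = 3" by auto
  thus ?thesis by (auto simp: idx_def Pm_def)
qed

lemma Pm_comp: "p permutes {1..3} \<Longrightarrow> Pm p (Pm q v) = Pm (q \<circ> p) v"
proof -
  assume p: "p permutes {1..3}"
  have "p i \<in> {1..3}" if "i \<in> {1..3}" for i using permutes_in_image[OF p] that by blast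
  hence h: "idx (Pm q v) (p j) = idx v (q (p j))" if "j \<in> {1..3}" for j using idx_Pm that by blast
  show ?thesis unfolding Pm_def[of p] Pm_def[of "q \<circ> p"] using h[of 1] h[of 2] h[of 3] by simp
qed

lemma Pm_id: "Pm id v = v"
  by (cases v) (simp add: Pm_def idx_def)

definition psi :: "nat \<Rightarrow> (nat \<Rightarrow> nat) \<Rightarrow> complex \<times> complex \<times> complex \<Rightarrow> complex \<times> complex \<times> complex" where
  "psi n s = Phi n \<circ> Pm (inv' s) \<circ> Phiinv n"

lemma psi_id: "psi n id = id"
  by (simp add: psi_def fun_eq_iff Pm_id Phi_Phiinv)

lemma psi_mult:
  assumes "s permutes {1..3}" "t permutes {1..3}"
  shows "psi n (s \<circ> t) = psi n s \<circ> psi n t"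
proof -
  have e: "inv' (s \<circ> t) = inv' t \<circ> inv' s"
    using assms by (simp add: o_inv_distrib permutes_bij)
  have si: "inv' s permutes {1..3}" using assms(1) by (rule permutes_inv)
  show ?thesis unfolding psi_def e
    by (simp add: fun_eq_iff Phiinv_Phi Pm_comp[OF si])
qed

lemma psi_bij:
  assumes "s permutes {1..3}"
  shows "bij (psi n s)"
proof -
  have si: "inv' s permutes {1..3}" using assms by (rule permutes_inv)
  have "psi n s \<circ> psi n (inv' s) = id"
    using psi_mult[OF assms si, of n] psi_id[of n] permutes_inv_o(1)[OF assms] by simp
  moreover have "psi n (inv' s) \<circ> psi n s = id"
    using psi_mult[OF si assms, of n] psi_id[of n] permutes_inv_o(2)[OF assms] by simp
  ultimately show ?thesis using o_bij by blast
qed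

lemma idx_v0: "j \<in> {1..3} \<Longrightarrow> idx (1, 2, 3) j = of_nat j"
proof -
  assume "j \<in> {1..3}"
  hence "j = 1 \<or> j = 2 \<or> j = 3" by auto
  thus ?thesis by (auto simp: idx_def)
qed

lemma psi_inj:
  assumes "s permutes {1..3}" "t permutes {1..3}" "psi n s = psi n t"
  shows "s = t"
proof -
  have si: "inv' s permutes {1..3}" and ti: "inv' t permutes {1..3}" using assms permutes_inv by auto
  have "Phiinv n (psi n s (Phi n (1,2,3))) = Phiinv n (psi n t (Phi n (1,2,3)))" using assms(3) by simp
  hence e: "Pm (inv' s) (1,2,3) = Pm (inv' t) (1,2,3)" by (simp add: psi_def Phiinv_Phi)
  have "inv' s i = inv' t i" for i
  proof (cases "i \<in> {1..3}")
    case True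
    hence "i = 1 \<or> i = 2 \<or> i = 3" by auto
    hence "idx (1,2,3) (inv' s i) = idx (1,2,3) (inv' t i)" using e by (auto simp: Pm_def)
    moreover have "inv' s i \<in> {1..3}" "inv' t i \<in> {1..3}" using True permutes_in_image[OF si] permutes_in_image[OF ti] by blast+
    ultimately have "(of_nat (inv' s i) :: complex) = of_nat (inv' t i)" by (simp add: idx_v0)
    thus ?thesis by simp
  next
    case False
    thus ?thesis using si ti by (simp add: permutes_not_in)
  qed
  hence "inv' s = inv' t" by auto
  thus ?thesis using permutes_inv_inv[OF assms(1)] permutes_inv_inv[OF assms(2)] by metis
qed

lemma T1_psi: "psi n (transpose 2 3) = T1 n"
  by (simp add: fun_eq_iff psi_def T1_def Pm_def idx_def Phi_def Phiinv_def V_args_def field_simps)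

lemma T2_psi: "psi n (transpose 1 2) = T2"
  by (simp add: fun_eq_iff psi_def T2_def Pm_def idx_def Phi_def Phiinv_def V_args_def field_simps)


lemma Bij_UNIV: "f \<in> Bij UNIV \<longleftrightarrow> bij f"
  by (simp add: Bij_def)

lemma carrier_BijG: "carrier (BijGroup UNIV) = Bij UNIV"
  by (simp add: BijGroup_def)

lemma mult_BijG: "f \<in> Bij UNIV \<Longrightarrow> g \<in> Bij UNIV \<Longrightarrow> f \<otimes>\<^bsub>BijGroup UNIV\<^esub> g = f \<circ> g"
  by (simp add: BijGroup_def compose_def fun_eq_iff)

lemma one_BijG: "\<one>\<^bsub>BijGroup UNIV\<^esub> = id"
  by (simp add: BijGroup_def fun_eq_iff)

lemma psi_hom: "psi n \<in> hom (sym_group 3) (BijGroup UNIV)"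
  unfolding hom_def
  by (auto simp: sym_group_carrier sym_group_mult carrier_BijG Bij_UNIV psi_bij mult_BijG psi_mult
           intro!: mult_BijG[symmetric])

lemma psi_gen_hom: "group_hom (sym_group 3) (BijGroup UNIV) (psi n)"
  by (simp add: group_hom_def group_hom_axioms_def sym_group_is_group group_BijGroup psi_hom)

abbreviation GG :: "nat \<Rightarrow> (complex \<times> complex \<times> complex \<Rightarrow> complex \<times> complex \<times> complex) set" where
  "GG n \<equiv> generate (BijGroup UNIV) {T1 n, T2}"

lemma gen_prod: "f \<in> GG n \<Longrightarrow> g \<in> GG n \<Longrightarrow> f \<circ> g \<in> GG n"
proof -
  assume f: "f \<in> GG n" and g: "g \<in> GG n"
  have sub: "{T1 n, T2} \<subseteq> carrier (BijGroup UNIV)"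
    using psi_bij[of "transpose 2 3" n] psi_bij[of "transpose 1 2" n] T1_psi[of n] T2_psi[of n]
    by (auto simp: carrier_BijG Bij_UNIV permutes_swap_id)
  have "f \<in> Bij UNIV" "g \<in> Bij UNIV"
    using group.generate_in_carrier[OF group_BijGroup sub] f g by (auto simp: carrier_BijG)
  then have "f \<circ> g = f \<otimes>\<^bsub>BijGroup UNIV\<^esub> g" by (simp add: mult_BijG)
  then show ?thesis using generate.eng[OF f g] by simp
qed

lemma transp13: "transpose (1::nat) 3 = transpose 1 2 \<circ> (transpose 2 3 \<circ> transpose 1 2)"
proof (rule ext)
  fix i :: nat
  show "transpose 1 3 i = (transpose 1 2 \<circ> (transpose 2 3 \<circ> transpose 1 2)) i"
    by (cases "i = 1"; cases "i = 2"; cases "i = 3") (simp_all add: transpose_def)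
qed

lemma gen_transp:
  assumes "a \<in> {1..3}" "b \<in> {1..3}" "a \<noteq> b"
  shows "psi n (transpose a b) \<in> GG n"
proof -
  have "T1 n \<in> GG n" by (rule generate.incl) simp
  then have t23: "psi n (transpose 2 3) \<in> GG n" using T1_psi[of n] by simp
  have "T2 \<in> GG n" by (rule generate.incl) simp
  then have t12: "psi n (transpose 1 2) \<in> GG n" using T2_psi[of n] by simp
  have p12: "transpose (1::nat) 2 permutes {1..3}" by (rule permutes_swap_id) auto
  have p23: "transpose (2::nat) 3 permutes {1..3}" by (rule permutes_swap_id) auto
  have "psi n (transpose 1 3) = psi n (transpose 1 2) \<circ> psi n (transpose 2 3 \<circ> transpose 1 2)"
    unfolding transp13 by (rule psi_mult[OF p12 permutes_compose[OF p12 p23]])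
  also have "psi n (transpose 2 3 \<circ> transpose 1 2) = psi n (transpose 2 3) \<circ> psi n (transpose 1 2)"
    by (rule psi_mult[OF p23 p12])
  finally have t13: "psi n (transpose 1 3) \<in> GG n" using gen_prod[OF t12 gen_prod[OF t23 t12]] by (simp only:)
  have t21: "psi n (transpose 2 1) \<in> GG n" using t12 by (simp add: transpose_commute)
  have t32: "psi n (transpose 3 2) \<in> GG n" using t23 by (simp add: transpose_commute)
  have t31: "psi n (transpose 3 1) \<in> GG n" using t13 by (simp add: transpose_commute)
  from assms have "a = 1 \<or> a = 2 \<or> a = 3" "b = 1 \<or> b = 2 \<or> b = 3" by auto
  with assms(3) show ?thesis using t12 t23 t13 t21 t32 t31 by auto
qed

lemma img_sub_gen:
  assumes "s permutes {1..3}"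
  shows "psi n s \<in> GG n"
  using assms finite_atLeastAtMost
proof (induction rule: permutes_induct)
  case id
  have "id \<in> GG n" using generate.one[of "BijGroup UNIV" "{T1 n, T2}"] by (simp add: one_BijG)
  then show ?case by (simp only: psi_id)
next
  case (swap a b p)
  have "psi n (transpose a b \<circ> p) = psi n (transpose a b) \<circ> psi n p"
    using swap by (simp add: psi_mult permutes_swap_id)
  moreover have "psi n (transpose a b) \<circ> psi n p \<in> GG n"
    using gen_prod gen_transp swap by blast
  ultimately show ?case by (simp only:)
qed

lemma gen_sub_img: "GG n \<subseteq> psi n ` carrier (sym_group 3)"
proof -
  interpret h: group_hom "sym_group 3" "BijGroup UNIV" "psi n" by (rule psi_gen_hom)
  have "transpose 2 3 \<in> carrier (sym_group 3)" "transpose 1 2 \<in> carrier (sym_group 3)"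
    by (simp_all add: sym_group_carrier permutes_swap_id)
  then have "psi n (transpose 2 3) \<in> psi n ` carrier (sym_group 3)"
     "psi n (transpose 1 2) \<in> psi n ` carrier (sym_group 3)" by blast+
  then have "{T1 n, T2} \<subseteq> psi n ` carrier (sym_group 3)"
    using T1_psi[of n] T2_psi[of n] by simp
  then show ?thesis
    using group.generate_subgroup_incl[OF group_BijGroup _ h.img_is_subgroup] by blast
qed

lemma Tgroup_iso: "Tgroup n \<cong> sym_group 3"
proof -
  have img: "psi n ` carrier (sym_group 3) = GG n"
    using gen_sub_img[of n] img_sub_gen[of _ n] by (auto simp: sym_group_carrier)
  have "psi n \<in> iso (sym_group 3) (Tgroup n)"
    unfolding iso_def
  proof (intro CollectI conjI)
    show "psi n \<in> hom (sym_group 3) (Tgroup n)"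
      using psi_hom[of n] img unfolding hom_def Tgroup_def by auto
    show "bij_betw (psi n) (carrier (sym_group 3)) (carrier (Tgroup n))"
      unfolding bij_betw_def
    proof
      show "inj_on (psi n) (carrier (sym_group 3))"
        by (auto simp: inj_on_def sym_group_carrier intro: psi_inj)
      show "psi n ` carrier (sym_group 3) = carrier (Tgroup n)"
        using img by (simp add: Tgroup_def)
    qed
  qed
  then have "sym_group 3 \<cong> Tgroup n" by (rule is_isoI)
  then show ?thesis by (rule group.iso_sym[OF sym_group_is_group])
qed


theorem mainTheorem12:
  fixes n :: nat
  shows "Tgroup n \<cong> sym_group 3 \<and>
    (\<forall>a b c. R_defined n a b c \<longrightarrow>
      (R_defined n a b (a - c - of_nat n) \<longrightarrow>
         R n a b c = R n a b (a - c - of_nat n)) \<and>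
      (R_defined n (1 + c - b) (1 + c - a) c \<longrightarrow>
         R n a b c = R n (1 + c - b) (1 + c - a) c) \<and>
      (R_defined n (1 + c - b) (1 + c - a) (1 - b - of_nat n) \<longrightarrow>
         R n a b c = R n (1 + c - b) (1 + c - a) (1 - b - of_nat n)) \<and>
      (R_defined n (1 + a - b - c - of_nat n) (1 - c - of_nat n) (a - c - of_nat n) \<longrightarrow>
         R n a b c = R n (1 + a - b - c - of_nat n) (1 - c - of_nat n) (a - c - of_nat n)) \<and>
      (R_defined n (1 + a - b - c - of_nat n) (1 - c - of_nat n) (1 - b - of_nat n) \<longrightarrow>
         R n a b c = R n (1 + a - b - c - of_nat n) (1 - c - of_nat n) (1 - b - of_nat n))) \<and>
    (\<forall>x y z. V_defined n x y z \<longrightarrow>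
      (V_defined n y x z \<longrightarrow> V n x y z = V n y x z) \<and>
      (V_defined n x z y \<longrightarrow> V n x y z = V n x z y) \<and>
      (V_defined n z y x \<longrightarrow> V n x y z = V n z y x) \<and>
      (V_defined n y z x \<longrightarrow> V n x y z = V n y z x) \<and>
      (V_defined n z x y \<longrightarrow> V n x y z = V n z x y))"
  by (rule conjI[OF Tgroup_iso analytic_part])

end
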